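(* Let $U\subset\mathbb{R}^2$ be open, let $x:U\to\mathbb{R}^3$ be smooth, let $\xi:U\to S^2$ be a proper frontal, let $\Omega$ be a tangent moving basis of $\xi$ with $D\xi=\Omega\Delta_\Omega^T$, $\Delta_\Omega=(\delta_{ij})$. With $C_1=2\mathscr{F}_\Omega(\delta_{22}\mathscr{L}_\Omega-\delta_{12}\mathscr{M}_{1\Omega})-\mathscr{E}_\Omega\mathcal{M}$, $C_2=2\mathscr{G}_\Omega(\delta_{22}\mathscr{L}_\Omega-\delta_{12}\mathscr{M}_{1\Omega})-2\mathscr{E}_\Omega(\delta_{11}\mathscr{N}_\Omega-\delta_{21}\mathscr{M}_{2\Omega})$, $C_3=\mathscr{G}_\Omega\mathcal{M}-2\mathscr{F}_\Omega(\delta_{11}\mathscr{N}_\Omega-\delta_{21}\mathscr{M}_{2\Omega})$, where $\mathcal{M}=\delta_{11}\mathscr{M}_{1\Omega}-\delta_{21}\mathscr{L}_\Omega+\delta_{22}\mathscr{M}_{2\Omega}-\delta_{12}\mathscr{N}_\Omega$, the discriminant $\mathcal{D}=C_2^2-4C_1C_3$ of the equation $C_1b_1^2+C_2b_1b_2+C_3b_2^2=0$ is non-negative at every point of $U$, and $\mathcal{D}=0$ at a point if and only if $C_1=C_2=C_3=0$ at that point.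
   Context: A frontal is a smooth map $f:U\to\mathbb{R}^3$ admitting locally a smooth unit vector field orthogonal to $f_{u_1},f_{u_2}$; proper means its singular set has empty interior. A tangent moving basis of $\xi$ is a smooth $\Omega=(w_1\ w_2):U\to M_{3\times2}(\mathbb{R})$ with linearly independent columns whose span contains $\xi_{u_1},\xi_{u_2}$; then $D\xi=\Omega\Delta_\Omega^T$ for a unique smooth $\Delta_\Omega$. Coefficients: $\mathscr{E}_\Omega=\langle w_1,w_1\rangle$, $\mathscr{F}_\Omega=\langle w_1,w_2\rangle$, $\mathscr{G}_\Omega=\langle w_2,w_2\rangle$, $\mathscr{L}_\Omega=-\langle x_{u_1},w_1\rangle$, $\mathscr{M}_{2\Omega}=-\langle x_{u_1},w_2\rangle$, $\mathscr{M}_{1\Omega}=-\langle x_{u_2},w_1\rangle$, $\mathscr{N}_\Omega=-\langle x_{u_2},w_2\rangle$. *)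

theory Defs
  imports "HOL-Analysis.Analysis"
begin

definition pd :: "2 \<Rightarrow> (real^2 \<Rightarrow> 'b::real_normed_vector) \<Rightarrow> real^2 \<Rightarrow> 'b" where
  "pd i f p = frechet_derivative f (at p) (axis i 1)"

fun iter_pd :: "2 list \<Rightarrow> (real^2 \<Rightarrow> 'b::real_normed_vector) \<Rightarrow> real^2 \<Rightarrow> 'b" where
  "iter_pd [] f = f"
| "iter_pd (i # is) f = pd i (iter_pd is f)"

definition smooth_on :: "(real^2) set \<Rightarrow> (real^2 \<Rightarrow> 'b::real_normed_vector) \<Rightarrow> bool" where
  "smooth_on U f \<longleftrightarrow> (\<forall>is. iter_pd is f differentiable_on U)"

definition frontal :: "(real^2) set \<Rightarrow> (real^2 \<Rightarrow> real^3) \<Rightarrow> bool" where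
  "frontal U f \<longleftrightarrow> smooth_on U f \<and>
     (\<forall>p\<in>U. \<exists>V \<nu>. open V \<and> p \<in> V \<and> V \<subseteq> U \<and> smooth_on V \<nu> \<and>
        (\<forall>q\<in>V. norm (\<nu> q) = 1 \<and> \<nu> q \<bullet> pd 1 f q = 0 \<and> \<nu> q \<bullet> pd 2 f q = 0))"

definition singular_set :: "(real^2) set \<Rightarrow> (real^2 \<Rightarrow> real^3) \<Rightarrow> (real^2) set" where
  "singular_set U f = {p\<in>U. \<not> inj (frechet_derivative f (at p))}"

definition proper_frontal :: "(real^2) set \<Rightarrow> (real^2 \<Rightarrow> real^3) \<Rightarrow> bool" where
  "proper_frontal U f \<longleftrightarrow> frontal U f \<and> interior (singular_set U f) = {}"

definition tangent_moving_basis ::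
  "(real^2) set \<Rightarrow> (real^2 \<Rightarrow> real^3) \<Rightarrow> (real^2 \<Rightarrow> real^3) \<Rightarrow> (real^2 \<Rightarrow> real^3) \<Rightarrow> bool" where
  "tangent_moving_basis U \<xi> w1 w2 \<longleftrightarrow> smooth_on U w1 \<and> smooth_on U w2 \<and>
     (\<forall>p\<in>U. (\<forall>a b. a *\<^sub>R w1 p + b *\<^sub>R w2 p = 0 \<longrightarrow> a = 0 \<and> b = 0) \<and>
             pd 1 \<xi> p \<in> span {w1 p, w2 p} \<and> pd 2 \<xi> p \<in> span {w1 p, w2 p})"

end

theory Submission
  imports Defs
begin

lemma alg_core:
  fixes E F G A B M :: real
  assumes E: "E > 0" and G: "G > 0" and W: "E*G - F^2 > 0"
  defines "C1 \<equiv> 2*F*A - E*M" and "C2 \<equiv> 2*G*A - 2*E*B" and "C3 \<equiv> G*M - 2*F*B"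
  shows "C2^2 - 4*C1*C3 \<ge> 0 \<and> (C2^2 - 4*C1*C3 = 0 \<longleftrightarrow> C1 = 0 \<and> C2 = 0 \<and> C3 = 0)"
proof -
  let ?D = "C2^2 - 4*C1*C3" and ?W = "E*G - F^2"
  have i1: "E^2 * ?D = (E*C2 - 2*F*C1)^2 + 4*?W*C1^2"
    unfolding C1_def C2_def C3_def by (simp add: algebra_simps power2_eq_square)
  have i2: "G^2 * ?D = (G*C2 - 2*F*C3)^2 + 4*?W*C3^2"
    unfolding C1_def C2_def C3_def by (simp add: algebra_simps power2_eq_square)
  have nn: "(E*C2 - 2*F*C1)^2 + 4*?W*C1^2 \<ge> 0" using W by (simp add: add_nonneg_nonneg)
  have E2: "E^2 > 0" using E by simp
  have D0: "?D \<ge> 0"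
  proof (rule ccontr)
    assume "\<not> ?D \<ge> 0"
    then have "E^2 * ?D < 0" using E2 by (simp add: mult_pos_neg)
    with i1 nn show False by linarith
  qed
  moreover have "?D = 0 \<Longrightarrow> C1 = 0 \<and> C2 = 0 \<and> C3 = 0"
  proof -
    assume D: "?D = 0"
    have s1: "(E*C2 - 2*F*C1)^2 + 4*?W*C1^2 = 0" using i1 D by simp
    have a: "4*?W*C1^2 \<ge> 0" using W by simp
    have "(E*C2 - 2*F*C1)^2 \<ge> 0" by simp
    then have "4*?W*C1^2 = 0" using s1 a by linarith
    then have c1: "C1 = 0" using W by simp
    then have "(E*C2)^2 = 0" using s1 by simp
    then have c2: "C2 = 0" using E by simp
    have s2: "(G*C2 - 2*F*C3)^2 + 4*?W*C3^2 = 0" using i2 D by simp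
    have b: "4*?W*C3^2 \<ge> 0" using W by simp
    have "(G*C2 - 2*F*C3)^2 \<ge> 0" by simp
    then have "4*?W*C3^2 = 0" using s2 b by linarith
    then have "C3 = 0" using W by simp
    with c1 c2 show ?thesis by simp
  qed
  ultimately show ?thesis by auto
qed

lemma gram_pos:
  fixes w1 w2 :: "real^3"
  assumes ind: "\<forall>a b. a *\<^sub>R w1 + b *\<^sub>R w2 = 0 \<longrightarrow> a = 0 \<and> b = 0"
  shows "w1 \<bullet> w1 > 0" "w2 \<bullet> w2 > 0" "(w1 \<bullet> w1)*(w2 \<bullet> w2) - (w1 \<bullet> w2)^2 > 0"
proof -
  have n1: "w1 \<noteq> 0" using ind[rule_format, of 1 0] by auto
  have n2: "w2 \<noteq> 0" using ind[rule_format, of 0 1] by auto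
  show g1: "w1 \<bullet> w1 > 0" using n1 by simp
  show g2: "w2 \<bullet> w2 > 0" using n2 by simp
  let ?v = "(w2 \<bullet> w2) *\<^sub>R w1 - (w1 \<bullet> w2) *\<^sub>R w2"
  have "?v \<noteq> 0"
  proof
    assume "?v = 0"
    then have "(w2 \<bullet> w2) *\<^sub>R w1 + (- (w1 \<bullet> w2)) *\<^sub>R w2 = 0" by simp
    then have "w2 \<bullet> w2 = 0" using ind by blast
    with g2 show False by simp
  qed
  then have "?v \<bullet> ?v > 0" by simp
  moreover have "?v \<bullet> ?v = (w2 \<bullet> w2) * ((w1 \<bullet> w1)*(w2 \<bullet> w2) - (w1 \<bullet> w2)^2)"
    by (simp add: inner_diff_left inner_diff_right algebra_simps power2_eq_square inner_commute)
  ultimately show "(w1 \<bullet> w1)*(w2 \<bullet> w2) - (w1 \<bullet> w2)^2 > 0"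
    using g2 by (simp add: zero_less_mult_iff)
qed

theorem proposition4p5:
  fixes U :: "(real^2) set"
    and x \<xi> w1 w2 :: "real^2 \<Rightarrow> real^3"
    and \<Delta> :: "real^2 \<Rightarrow> real^2^2"
  assumes "open U"
    and "smooth_on U x"
    and "\<forall>p\<in>U. norm (\<xi> p) = 1"
    and "proper_frontal U \<xi>"
    and "tangent_moving_basis U \<xi> w1 w2"
    and "\<forall>i j. smooth_on U (\<lambda>p. \<Delta> p $ i $ j)"
    and "\<forall>p\<in>U. \<forall>j. pd j \<xi> p = (\<Delta> p $ j $ 1) *\<^sub>R w1 p + (\<Delta> p $ j $ 2) *\<^sub>R w2 p"
  shows "\<forall>p\<in>U.
    (let E = w1 p \<bullet> w1 p; F = w1 p \<bullet> w2 p; G = w2 p \<bullet> w2 p;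
         L = - (pd 1 x p \<bullet> w1 p); M2 = - (pd 1 x p \<bullet> w2 p);
         M1 = - (pd 2 x p \<bullet> w1 p); N = - (pd 2 x p \<bullet> w2 p);
         d11 = \<Delta> p $ 1 $ 1; d12 = \<Delta> p $ 1 $ 2; d21 = \<Delta> p $ 2 $ 1; d22 = \<Delta> p $ 2 $ 2;
         M = d11 * M1 - d21 * L + d22 * M2 - d12 * N;
         C1 = 2 * F * (d22 * L - d12 * M1) - E * M;
         C2 = 2 * G * (d22 * L - d12 * M1) - 2 * E * (d11 * N - d21 * M2);
         C3 = G * M - 2 * F * (d11 * N - d21 * M2);
         D = C2\<^sup>2 - 4 * C1 * C3
     in D \<ge> 0 \<and> (D = 0 \<longleftrightarrow> C1 = 0 \<and> C2 = 0 \<and> C3 = 0))"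
proof
  fix p assume pU: "p \<in> U"
  have ind: "\<forall>a b. a *\<^sub>R w1 p + b *\<^sub>R w2 p = 0 \<longrightarrow> a = 0 \<and> b = 0"
    using assms(5) pU unfolding tangent_moving_basis_def by blast
  note g = gram_pos[OF ind]
  show "let E = w1 p \<bullet> w1 p; F = w1 p \<bullet> w2 p; G = w2 p \<bullet> w2 p;
         L = - (pd 1 x p \<bullet> w1 p); M2 = - (pd 1 x p \<bullet> w2 p);
         M1 = - (pd 2 x p \<bullet> w1 p); N = - (pd 2 x p \<bullet> w2 p);
         d11 = \<Delta> p $ 1 $ 1; d12 = \<Delta> p $ 1 $ 2; d21 = \<Delta> p $ 2 $ 1; d22 = \<Delta> p $ 2 $ 2;
         M = d11 * M1 - d21 * L + d22 * M2 - d12 * N;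
         C1 = 2 * F * (d22 * L - d12 * M1) - E * M;
         C2 = 2 * G * (d22 * L - d12 * M1) - 2 * E * (d11 * N - d21 * M2);
         C3 = G * M - 2 * F * (d11 * N - d21 * M2);
         D = C2\<^sup>2 - 4 * C1 * C3
     in D \<ge> 0 \<and> (D = 0 \<longleftrightarrow> C1 = 0 \<and> C2 = 0 \<and> C3 = 0)"
    unfolding Let_def
    using alg_core[OF g(1) g(2) g(3)] by blast
qed

end
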